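(* Let $G$ be a finite group, $\mathfrak{K}$ an algebraically closed field of characteristic zero, $\omega$ a normalized $3$-cocycle on $G$ with values in $\mathfrak{K}^\times$, and $z\in\mathrm{Z}(G)$ a central element such that the $2$-cocycle $\gamma_{\omega,z}(g,h)=\omega(g,h,z)\,\omega(g,z,h)^{-1}\,\omega(z,g,h)$ represents a nontrivial class in $\mathrm{H}^2(G,\mathfrak{K}^\times)$. Then in the fusion category $\mathbf{Vec}_G^\omega$, the isomorphism class of the simple object $X_z$ (which lies in the center of the classifying category) is not in the image of the characteristic homomorphism $\mathrm{Iso}(\mathbf{Z}(\mathbb{B}(\mathbf{Vec}_G^\omega)))\to\mathrm{Z}(\mathbf{Ho}(\mathbb{B}(\mathbf{Vec}_G^\omega)))$; that is, $X_z$ admits no structure of an object of the Drinfeld center.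
   Context: $\mathbf{Vec}_G^\omega$ is the fusion category of finite-dimensional $G$-graded $\mathfrak{K}$-vector spaces: its simple objects are $X_g$, $g\in G$ (one-dimensional in degree $g$), with $X_g\otimes X_h=X_{gh}$ and associativity constraint $(X_g\otimes X_h)\otimes X_k\to X_g\otimes(X_h\otimes X_k)$ given by the scalar $\omega(g,h,k)$. $\mathbb{B}(\mathbf{Vec}_G^\omega)$ is the one-object bicategory with endomorphism category $\mathbf{Vec}_G^\omega$. Its Drinfeld center is the usual Drinfeld center: objects $(X,p)$ with natural isomorphisms $p(Y)\colon X\otimes Y\to Y\otimes X$ satisfying $p(I)=$ unit constraints and the hexagon compatibility $p(Y\otimes Z)=(\mathrm{id}_Y\otimes p(Z))(p(Y)\otimes\mathrm{id}_Z)$ (associators inserted). $\mathrm{Z}(\mathbf{Ho}(\mathbb{B}(\mathbf{Vec}_G^\omega)))$ is the monoid of isomorphism classes $[X]$ with $X\otimes Y\cong Y\otimes X$ for all $Y$; the characteristic homomorphism sends $[(X,p)]$ to $[X]$. *)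

theory Defs
  imports "HOL-Algebra.Group" "Jordan_Normal_Form.Matrix"
          "HOL-Computational_Algebra.Polynomial"
begin

definition alg_closed :: "'k::field itself \<Rightarrow> bool" where
  "alg_closed _ \<longleftrightarrow> (\<forall>p :: 'k poly. degree p > 0 \<longrightarrow> (\<exists>x. poly p x = 0))"

definition normalized_3_cocycle ::
  "('g, 'b) monoid_scheme \<Rightarrow> ('g \<Rightarrow> 'g \<Rightarrow> 'g \<Rightarrow> 'k::field) \<Rightarrow> bool" where
  "normalized_3_cocycle G \<omega> \<longleftrightarrow>
     (\<forall>g\<in>carrier G. \<forall>h\<in>carrier G. \<forall>k\<in>carrier G. \<omega> g h k \<noteq> 0) \<and>
     (\<forall>g\<in>carrier G. \<forall>h\<in>carrier G. \<forall>k\<in>carrier G. \<forall>l\<in>carrier G.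
        \<omega> h k l * \<omega> g (h \<otimes>\<^bsub>G\<^esub> k) l * \<omega> g h k
          = \<omega> (g \<otimes>\<^bsub>G\<^esub> h) k l * \<omega> g h (k \<otimes>\<^bsub>G\<^esub> l)) \<and>
     (\<forall>g\<in>carrier G. \<forall>h\<in>carrier G.
        \<omega> \<one>\<^bsub>G\<^esub> g h = 1 \<and> \<omega> g \<one>\<^bsub>G\<^esub> h = 1 \<and> \<omega> g h \<one>\<^bsub>G\<^esub> = 1)"

definition gamma2 ::
  "('g \<Rightarrow> 'g \<Rightarrow> 'g \<Rightarrow> 'k::field) \<Rightarrow> 'g \<Rightarrow> 'g \<Rightarrow> 'g \<Rightarrow> 'k" where
  "gamma2 \<omega> z g h = \<omega> g h z * inverse (\<omega> g z h) * \<omega> z g h"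

text \<open>A 2-cochain represents the trivial class of H^2(G, K^x) (trivial action)
iff it is a coboundary of a 1-cochain beta : G \<rightarrow> K^x.\<close>

definition is_2_coboundary ::
  "('g, 'b) monoid_scheme \<Rightarrow> ('g \<Rightarrow> 'g \<Rightarrow> 'k::field) \<Rightarrow> bool" where
  "is_2_coboundary G c \<longleftrightarrow>
     (\<exists>\<beta> :: 'g \<Rightarrow> 'k. (\<forall>g\<in>carrier G. \<beta> g \<noteq> 0) \<and>
        (\<forall>g\<in>carrier G. \<forall>h\<in>carrier G.
            c g h = \<beta> g * \<beta> h * inverse (\<beta> (g \<otimes>\<^bsub>G\<^esub> h))))"

text \<open>Objects: finite lists of group elements [g_1,...,g_n], standing for the
direct sum of the simple objects X_{g_1},...,X_{g_n} (every finite-dimensional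
G-graded space is of this form).  Composition is matrix product.\<close>

definition vobj :: "('g, 'b) monoid_scheme \<Rightarrow> 'g list \<Rightarrow> bool" where
  "vobj G L \<longleftrightarrow> set L \<subseteq> carrier G"

definition vhom ::
  "'g list \<Rightarrow> 'g list \<Rightarrow> 'k::field mat \<Rightarrow> bool" where
  "vhom L M f \<longleftrightarrow> f \<in> carrier_mat (length M) (length L) \<and>
     (\<forall>i<length M. \<forall>j<length L. M ! i \<noteq> L ! j \<longrightarrow> f $$ (i, j) = 0)"

definition viso ::
  "'g list \<Rightarrow> 'g list \<Rightarrow> 'k::field mat \<Rightarrow> bool" where
  "viso L M f \<longleftrightarrow> vhom L M f \<and>
     (\<exists>q. vhom M L q \<and> q * f = 1\<^sub>m (length L) \<and> f * q = 1\<^sub>m (length M))"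

text \<open>Tensor product of objects: basis index (i,j) \<mapsto> i * length M + j.\<close>

definition vtens :: "('g, 'b) monoid_scheme \<Rightarrow> 'g list \<Rightarrow> 'g list \<Rightarrow> 'g list" where
  "vtens G L M = concat (map (\<lambda>g. map (\<lambda>h. g \<otimes>\<^bsub>G\<^esub> h) M) L)"

text \<open>Tensor product of morphisms: Kronecker product (same index convention).\<close>

definition kron :: "'k::field mat \<Rightarrow> 'k mat \<Rightarrow> 'k mat" where
  "kron A B = mat (dim_row A * dim_row B) (dim_col A * dim_col B)
     (\<lambda>(i, j). A $$ (i div dim_row B, j div dim_col B) * B $$ (i mod dim_row B, j mod dim_col B))"

text \<open>Associativity constraint (L \<otimes> M) \<otimes> N \<rightarrow> L \<otimes> (M \<otimes> N): diagonal, acting on the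
summand X_g \<otimes> X_h \<otimes> X_k by omega(g,h,k).  Index ((a,b),c) = (a*m+b)*n+c.\<close>

definition vassoc ::
  "('g \<Rightarrow> 'g \<Rightarrow> 'g \<Rightarrow> 'k::field) \<Rightarrow> 'g list \<Rightarrow> 'g list \<Rightarrow> 'g list \<Rightarrow> 'k mat" where
  "vassoc \<omega> L M N =
     (let m = length M; n = length N; d = length L * m * n in
      mat d d (\<lambda>(i, j). if i = j
         then \<omega> (L ! (i div (m * n))) (M ! ((i div n) mod m)) (N ! (i mod n)) else 0))"

definition vassoc_inv ::
  "('g \<Rightarrow> 'g \<Rightarrow> 'g \<Rightarrow> 'k::field) \<Rightarrow> 'g list \<Rightarrow> 'g list \<Rightarrow> 'g list \<Rightarrow> 'k mat" where
  "vassoc_inv \<omega> L M N =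
     (let m = length M; n = length N; d = length L * m * n in
      mat d d (\<lambda>(i, j). if i = j
         then inverse (\<omega> (L ! (i div (m * n))) (M ! ((i div n) mod m)) (N ! (i mod n))) else 0))"

text \<open>The unit object is [1]; since omega is normalized the unit constraints are
identities.  A half-braiding on an object X (i.e. a structure of an object of the
Drinfeld center on X): a family of isomorphisms p(Y) : X \<otimes> Y \<rightarrow> Y \<otimes> X, natural
in Y, with p(I) given by the unit constraints and the hexagon
p(Y \<otimes> Z) = a^{-1}_{Y,Z,X} (id_Y \<otimes> p(Z)) a_{Y,X,Z} (p(Y) \<otimes> id_Z) a^{-1}_{X,Y,Z}.\<close>

definition half_braiding ::
  "('g, 'b) monoid_scheme \<Rightarrow> ('g \<Rightarrow> 'g \<Rightarrow> 'g \<Rightarrow> 'k::field) \<Rightarrow> 'g list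
     \<Rightarrow> ('g list \<Rightarrow> 'k mat) \<Rightarrow> bool" where
  "half_braiding G \<omega> X p \<longleftrightarrow>
     (\<forall>Y. vobj G Y \<longrightarrow> viso (vtens G X Y) (vtens G Y X) (p Y)) \<and>
     (\<forall>Y Y' f. vobj G Y \<longrightarrow> vobj G Y' \<longrightarrow> vhom Y Y' f \<longrightarrow>
        p Y' * kron (1\<^sub>m (length X)) f = kron f (1\<^sub>m (length X)) * p Y) \<and>
     p [\<one>\<^bsub>G\<^esub>] = 1\<^sub>m (length X) \<and>
     (\<forall>Y Z. vobj G Y \<longrightarrow> vobj G Z \<longrightarrow>
        p (vtens G Y Z) =
          vassoc_inv \<omega> Y Z X * kron (1\<^sub>m (length Y)) (p Z) * vassoc \<omega> Y X Z
            * kron (p Y) (1\<^sub>m (length Z)) * vassoc_inv \<omega> X Y Z)"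

end

theory Submission
  imports Defs
begin

lemma mul11:
  fixes A B :: "'k::field mat"
  assumes "A \<in> carrier_mat 1 1" "B \<in> carrier_mat 1 1"
  shows "A * B \<in> carrier_mat 1 1" "(A * B) $$ (0,0) = A $$ (0,0) * B $$ (0,0)"
  using assms by (auto simp: scalar_prod_def)

lemma kron11:
  fixes A B :: "'k::field mat"
  assumes "A \<in> carrier_mat 1 1" "B \<in> carrier_mat 1 1"
  shows "kron A B \<in> carrier_mat 1 1" "kron A B $$ (0,0) = A $$ (0,0) * B $$ (0,0)"
  using assms by (auto simp: kron_def)

lemma vassoc11:
  "vassoc \<omega> [a] [b] [c] \<in> carrier_mat 1 1" "vassoc \<omega> [a] [b] [c] $$ (0,0) = \<omega> a b c"
  "vassoc_inv \<omega> [a] [b] [c] \<in> carrier_mat 1 1"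
  "vassoc_inv \<omega> [a] [b] [c] $$ (0,0) = inverse (\<omega> a b c)"
  by (auto simp: vassoc_def vassoc_inv_def Let_def)

lemma vtens11: "vtens G [a] [b] = [a \<otimes>\<^bsub>G\<^esub> b]"
  by (simp add: vtens_def)

theorem proposition5p5:
  fixes G :: "('g, 'b) monoid_scheme"
    and \<omega> :: "'g \<Rightarrow> 'g \<Rightarrow> 'g \<Rightarrow> 'k::field_char_0"
    and z :: 'g
  assumes "group G" and "finite (carrier G)"
    and "alg_closed TYPE('k)"
    and "normalized_3_cocycle G \<omega>"
    and "z \<in> carrier G" and "\<forall>g\<in>carrier G. g \<otimes>\<^bsub>G\<^esub> z = z \<otimes>\<^bsub>G\<^esub> g"
    and "\<not> is_2_coboundary G (gamma2 \<omega> z)"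
  shows "\<not> (\<exists>p. half_braiding G \<omega> [z] p)"
proof
  assume "\<exists>p. half_braiding G \<omega> [z] p"
  then obtain p where hb: "half_braiding G \<omega> [z] p" by blast
  have w0: "\<And>g h k. g \<in> carrier G \<Longrightarrow> h \<in> carrier G \<Longrightarrow> k \<in> carrier G \<Longrightarrow> \<omega> g h k \<noteq> 0"
    using assms(4) by (simp add: normalized_3_cocycle_def)
  define \<beta> where "\<beta> g = p [g] $$ (0,0)" for g
  have car: "p [g] \<in> carrier_mat 1 1" and nz: "\<beta> g \<noteq> 0" if "g \<in> carrier G" for g
  proof -
    have "vobj G [g]" using that by (simp add: vobj_def)
    then have vi: "viso [z \<otimes>\<^bsub>G\<^esub> g] [g \<otimes>\<^bsub>G\<^esub> z] (p [g])"
      using hb unfolding half_braiding_def by (metis vtens11)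
    then obtain q where q: "vhom [g \<otimes>\<^bsub>G\<^esub> z] [z \<otimes>\<^bsub>G\<^esub> g] q" "q * p [g] = 1\<^sub>m 1"
      by (auto simp: viso_def)
    show c: "p [g] \<in> carrier_mat 1 1" using vi by (simp add: viso_def vhom_def)
    have qc: "q \<in> carrier_mat 1 1" using q(1) by (simp add: vhom_def)
    have "(q * p [g]) $$ (0,0) = 1" using q(2) by simp
    then have "q $$ (0,0) * \<beta> g = 1" using mul11(2)[OF qc c] by (simp add: \<beta>_def)
    then show "\<beta> g \<noteq> 0" by auto
  qed
  have "is_2_coboundary G (gamma2 \<omega> z)"
    unfolding is_2_coboundary_def
  proof (intro exI conjI ballI)
    fix g assume "g \<in> carrier G" then show "\<beta> g \<noteq> 0" by (rule nz)
  next
    fix g h assume g: "g \<in> carrier G" and h: "h \<in> carrier G"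
    have "vobj G [g]" "vobj G [h]" using g h by (auto simp: vobj_def)
    then have eq: "p [g \<otimes>\<^bsub>G\<^esub> h] = vassoc_inv \<omega> [g] [h] [z] * kron (1\<^sub>m 1) (p [h]) * vassoc \<omega> [g] [z] [h]
            * kron (p [g]) (1\<^sub>m 1) * vassoc_inv \<omega> [z] [g] [h]"
      using hb unfolding half_braiding_def by (metis vtens11 length_Cons list.size(3) One_nat_def)
    have one: "(1\<^sub>m 1 :: 'k mat) \<in> carrier_mat 1 1" by simp
    note c = car[OF g] car[OF h] one vassoc11
    have "\<beta> (g \<otimes>\<^bsub>G\<^esub> h) = inverse (\<omega> g h z) * \<beta> h * \<omega> g z h * \<beta> g * inverse (\<omega> z g h)"
    proof -
      define A1 where "A1 = vassoc_inv \<omega> [g] [h] [z]"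
      define A2 where "A2 = kron (1\<^sub>m 1) (p [h])"
      define A3 where "A3 = vassoc \<omega> [g] [z] [h]"
      define A4 where "A4 = kron (p [g]) (1\<^sub>m 1)"
      define A5 where "A5 = vassoc_inv \<omega> [z] [g] [h]"
      have c1: "A1 \<in> carrier_mat 1 1" "A3 \<in> carrier_mat 1 1" "A5 \<in> carrier_mat 1 1"
        unfolding A1_def A3_def A5_def by (rule vassoc11)+
      have c2: "A2 \<in> carrier_mat 1 1" "A4 \<in> carrier_mat 1 1"
        unfolding A2_def A4_def using kron11(1)[OF one car[OF h]] kron11(1)[OF car[OF g] one] by auto
      have e: "A1 $$ (0,0) = inverse (\<omega> g h z)" "A3 $$ (0,0) = \<omega> g z h"
        "A5 $$ (0,0) = inverse (\<omega> z g h)" "A2 $$ (0,0) = \<beta> h" "A4 $$ (0,0) = \<beta> g"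
        unfolding A1_def A3_def A5_def A2_def A4_def \<beta>_def using kron11(2)[OF one car[OF h]] kron11(2)[OF car[OF g] one] by (simp_all add: vassoc11)
      have "p [g \<otimes>\<^bsub>G\<^esub> h] = A1 * A2 * A3 * A4 * A5"
        unfolding eq A1_def A2_def A3_def A4_def A5_def by simp
      moreover have "(A1 * A2 * A3 * A4 * A5) $$ (0,0) = A1 $$ (0,0) * A2 $$ (0,0) * A3 $$ (0,0) * A4 $$ (0,0) * A5 $$ (0,0)"
      proof -
        have d1: "A1 * A2 \<in> carrier_mat 1 1" using mul11(1) c1 c2 by blast
        have d2: "A1 * A2 * A3 \<in> carrier_mat 1 1" using mul11(1)[OF d1] c1 by blast
        have d3: "A1 * A2 * A3 * A4 \<in> carrier_mat 1 1" using mul11(1)[OF d2] c2 by blast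
        show ?thesis using mul11(2)[OF d3 c1(3)] mul11(2)[OF d2 c2(2)] mul11(2)[OF d1 c1(2)]
           mul11(2)[OF c1(1) c2(1)] by simp
      qed
      ultimately show ?thesis unfolding \<beta>_def using e by (simp add: \<beta>_def)
    qed
    then show "gamma2 \<omega> z g h = \<beta> g * \<beta> h * inverse (\<beta> (g \<otimes>\<^bsub>G\<^esub> h))"
      using w0 g h assms(5) nz[OF g] nz[OF h]
        nz[OF group.subgroupE(4)[OF assms(1) group.subgroup_self[OF assms(1)] g h]]
      by (simp add: gamma2_def field_simps)
  qed
  with assms(7) show False by simp
qed

end
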